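(* Let $G$ be a $4$-graph. Then $G$ is $\mathscr C_2^{(4)}$-hom-free if and only if there is a function $c$ assigning to every $3$-element subset $T$ of $V(G)$ either the label "blue" or one of the three vertices of $T$, such that for every edge $e\in E(G)$ there is a vertex $v\in e$ for which $c(T)=v$ for each of the three $3$-subsets $T\subset e$ containing $v$, and $c(e\setminus\{v\})=$ "blue".
   Context: A $4$-graph is a $4$-uniform hypergraph. For $\ell>4$, the tight cycle $C_\ell^{(4)}$ has vertices $v_1,\dots,v_\ell$ and edges $\{v_i,v_{i+1},v_{i+2},v_{i+3}\}$ for $1\le i\le\ell$ (indices modulo $\ell$). A homomorphism $F\to G$ of $r$-graphs is a map $\phi:V(F)\to V(G)$ such that for every edge $\{x_1,\dots,x_r\}$ of $F$, the image $\{\phi(x_1),\dots,\phi(x_r)\}$ is an edge of $G$ (in particular these $r$ images are distinct). $G$ is $F$-hom-free if there is no homomorphism $F\to G$, and it is hom-free with respect to a family if it is $F$-hom-free for every member $F$. $\mathscr C_k^{(r)}$ denotes the family of all tight cycles $C_\ell^{(r)}$ with $\ell>r$ and $\ell\equiv k\pmod r$. *)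

theory Defs
  imports Main
begin

definition r_graph :: "nat \<Rightarrow> 'a set \<times> 'a set set \<Rightarrow> bool" where
  "r_graph r G \<longleftrightarrow> finite (fst G) \<and> (\<forall>e\<in>snd G. e \<subseteq> fst G \<and> card e = r)"

definition is_hom :: "'b set \<times> 'b set set \<Rightarrow> 'a set \<times> 'a set set \<Rightarrow> ('b \<Rightarrow> 'a) \<Rightarrow> bool" where
  "is_hom F G \<phi> \<longleftrightarrow> (\<forall>x\<in>fst F. \<phi> x \<in> fst G) \<and>
     (\<forall>f\<in>snd F. \<phi> ` f \<in> snd G \<and> card (\<phi> ` f) = card f)"

definition hom_free :: "'a set \<times> 'a set set \<Rightarrow> 'b set \<times> 'b set set \<Rightarrow> bool" where
  "hom_free G F \<longleftrightarrow> \<not> (\<exists>\<phi>. is_hom F G \<phi>)"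

definition tight_cycle :: "nat \<Rightarrow> nat \<Rightarrow> nat set \<times> nat set set" where
  "tight_cycle r l = ({..<l}, {{(i + j) mod l | j. j < r} | i. i < l})"

definition tight_cycle_family :: "nat \<Rightarrow> nat \<Rightarrow> (nat set \<times> nat set set) set" where
  "tight_cycle_family r k = {tight_cycle r l | l. l > r \<and> l mod r = k mod r}"

definition family_hom_free :: "'a set \<times> 'a set set \<Rightarrow> ('b set \<times> 'b set set) set \<Rightarrow> bool" where
  "family_hom_free G \<F> \<longleftrightarrow> (\<forall>F\<in>\<F>. hom_free G F)"

end

theory Submission
  imports Defs
begin


definition win :: "(nat \<Rightarrow> 'a) \<Rightarrow> nat \<Rightarrow> 'a set" where
  "win x i = {x i, x (i+1), x (i+2), x (i+3)}"

definition tau :: "'a set \<Rightarrow> 'a set \<Rightarrow> 'a \<Rightarrow> 'a" where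
  "tau f f' u = (if u \<in> f' then u else the_elem (f' - f))"

lemma distinct4: assumes "card {p,q,r,s} = 4"
  shows "p\<noteq>q \<and> p\<noteq>r \<and> p\<noteq>s \<and> q\<noteq>r \<and> q\<noteq>s \<and> r\<noteq>s"
  using assms by (auto simp: card_insert_if split: if_splits)

lemma rotate:
  assumes "\<forall>i\<le>n. win y i \<in> E" "y (n+k) = a" "k < 4"
  shows "\<exists>y' n'. n \<le> n' \<and> (\<forall>i<n+4. y' i = y i) \<and> (\<forall>i\<le>n'. win y' i \<in> E) \<and>
     win y' n' = win y n \<and> y' n' = a \<and>
     (\<forall>j. n' \<le> j \<and> j < n'+4 \<longrightarrow> (\<exists>j0. n \<le> j0 \<and> j0 < n+4 \<and> j0 mod 4 = j mod 4 \<and> y' j = y j0))"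
  using assms
proof (induction k arbitrary: y n)
  case 0
  show ?case
    apply (rule exI[of _ y], rule exI[of _ n])
    using 0 by auto
next
  case (Suc k)
  define y1 where "y1 = y(n+4 := y n)"
  have y1v: "y1 (n+1) = y (n+1)" "y1 (n+1+1) = y (n+2)" "y1 (n+1+2) = y (n+3)" "y1 (n+1+3) = y n"
    unfolding y1_def by (simp_all add: numeral_3_eq_3 numeral_2_eq_2)
  have w1: "\<forall>i\<le>n+1. win y1 i \<in> E"
  proof (intro allI impI)
    fix i assume i: "i \<le> n+1"
    show "win y1 i \<in> E"
    proof (cases "i \<le> n")
      case True
      then have "win y1 i = win y i" unfolding win_def y1_def by auto
      then show ?thesis using Suc.prems True by auto
    next
      case False
      then have "i = n+1" using i by auto
      have "win y1 i = {y (n+1), y (n+2), y (n+3), y n}" unfolding win_def \<open>i = n+1\<close>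
        using y1v by (simp only:)
      then have "win y1 i = win y n" unfolding win_def by blast
      then show ?thesis using Suc.prems by auto
    qed
  qed
  have a1: "y1 ((n+1) + k) = a" using Suc.prems unfolding y1_def by auto
  obtain y' n' where P: "n+1 \<le> n'" "\<forall>i<n+1+4. y' i = y1 i" "\<forall>i\<le>n'. win y' i \<in> E"
     "win y' n' = win y1 (n+1)" "y' n' = a"
     "\<forall>j. n' \<le> j \<and> j < n'+4 \<longrightarrow> (\<exists>j0. n+1 \<le> j0 \<and> j0 < n+1+4 \<and> j0 mod 4 = j mod 4 \<and> y' j = y1 j0)"
    using Suc.IH[OF w1 a1] Suc.prems(3) by auto
  have "win y1 (n+1) = {y (n+1), y (n+2), y (n+3), y n}" unfolding win_def
    using y1v by (simp only:)
  then have "win y1 (n+1) = win y n" unfolding win_def by blast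
  moreover have "\<forall>i<n+4. y' i = y i" using P(2) unfolding y1_def by auto
  moreover have "\<forall>j. n' \<le> j \<and> j < n'+4 \<longrightarrow> (\<exists>j0. n \<le> j0 \<and> j0 < n+4 \<and> j0 mod 4 = j mod 4 \<and> y' j = y j0)"
  proof (intro allI impI)
    fix j assume "n' \<le> j \<and> j < n'+4"
    then obtain j1 where j1: "n+1 \<le> j1" "j1 < n+1+4" "j1 mod 4 = j mod 4" "y' j = y1 j1" using P(6) by blast
    show "\<exists>j0. n \<le> j0 \<and> j0 < n+4 \<and> j0 mod 4 = j mod 4 \<and> y' j = y j0"
    proof (cases "j1 = n+4")
      case True
      then show ?thesis using j1 unfolding y1_def
        by (intro exI[of _ n]) auto
    next
      case False
      then show ?thesis using j1 unfolding y1_def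
        by (intro exI[of _ j1]) auto
    qed
  qed
  ultimately show ?case using P by (intro exI[of _ y'] exI[of _ n']) auto
qed

locale hg = fixes E :: "'a set set" assumes card4: "e \<in> E \<Longrightarrow> card e = 4"
begin

inductive reach :: "'a set \<Rightarrow> 'a set \<Rightarrow> ('a \<Rightarrow> 'a) \<Rightarrow> bool" where
  base: "e \<in> E \<Longrightarrow> reach e e id"
| step: "reach e f g \<Longrightarrow> f' \<in> E \<Longrightarrow> card (f \<inter> f') = 3 \<Longrightarrow> reach e f' (tau f f' \<circ> g)"

lemma reach_E: "reach e f g \<Longrightarrow> e \<in> E \<and> f \<in> E"
  by (induction rule: reach.induct) auto

lemma finE: "e \<in> E \<Longrightarrow> finite e"
proof (rule ccontr)
  assume "e \<in> E" "infinite e"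
  then show False using card4[of e] by simp
qed

lemma adj_facts:
  assumes "f\<in>E" "f'\<in>E" "card (f \<inter> f') = 3"
  obtains a b where "f - f' = {a}" "f' - f = {b}"
proof -
  have c1: "card (f - f') = 1" using card_Diff_subset_Int[of f f'] finE assms card4 by auto
  have c2: "card (f' - f) = 1" using card_Diff_subset_Int[of f' f] finE assms card4
    by (auto simp: Int_commute)
  obtain a where a: "f - f' = {a}" using card_1_singletonE[OF c1] .
  obtain b where b: "f' - f = {b}" using card_1_singletonE[OF c2] .
  show ?thesis using that[OF a b] .
qed

lemma tau_in:
  assumes "f\<in>E" "f'\<in>E" "card (f \<inter> f') = 3" "u \<in> f"
  shows "tau f f' u \<in> f'"
proof -
  obtain a b where ab: "f - f' = {a}" "f' - f = {b}" using adj_facts[OF assms(1-3)] by blast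
  show ?thesis unfolding tau_def using ab by auto
qed

lemma ab_facts:
  assumes "f - f' = {a}" "f' - f = {b}"
  shows "a \<in> f" "a \<notin> f'" "b \<in> f'" "b \<notin> f" "\<And>x. x \<in> f \<Longrightarrow> x \<notin> f' \<Longrightarrow> x = a"
    "\<And>x. x \<in> f' \<Longrightarrow> x \<notin> f \<Longrightarrow> x = b" "the_elem (f' - f) = b" "the_elem (f - f') = a"
  using assms by (blast, blast, blast, blast, blast, blast, simp, simp)

lemma tau_inj:
  assumes "f\<in>E" "f'\<in>E" "card (f \<inter> f') = 3"
  shows "inj_on (tau f f') f"
proof -
  obtain a b where ab0: "f - f' = {a}" "f' - f = {b}" using adj_facts[OF assms] by blast
  note ab = ab_facts[OF ab0]
  show ?thesis unfolding inj_on_def tau_def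
  proof (intro ballI impI)
    fix u u' assume u: "u \<in> f" "u' \<in> f"
      and eq: "(if u \<in> f' then u else the_elem (f' - f)) = (if u' \<in> f' then u' else the_elem (f' - f))"
    show "u = u'"
    proof (cases "u \<in> f'"; cases "u' \<in> f'")
      assume "u \<in> f'" "u' \<in> f'" then show ?thesis using eq by simp
    next
      assume "u \<in> f'" "u' \<notin> f'" then show ?thesis using eq ab(1-4,7) u by simp
    next
      assume "u \<notin> f'" "u' \<in> f'" then show ?thesis using eq ab(1-4,7) u by simp
    next
      assume "u \<notin> f'" "u' \<notin> f'" then show ?thesis using ab(5) u by blast
    qed
  qed
qed

lemma tau_back:
  assumes "f\<in>E" "f'\<in>E" "card (f \<inter> f') = 3" "u \<in> f"
  shows "tau f' f (tau f f' u) = u"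
proof -
  obtain a b where ab0: "f - f' = {a}" "f' - f = {b}" using adj_facts[OF assms(1-3)] by blast
  note ab = ab_facts[OF ab0]
  show ?thesis
  proof (cases "u \<in> f'")
    case True then show ?thesis unfolding tau_def using assms(4) by simp
  next
    case False
    then have "u = a" using ab(5) assms(4) by blast
    then show ?thesis unfolding tau_def using ab(1-4,7,8) False by simp
  qed
qed

lemma tau_out:
  assumes "f\<in>E" "f'\<in>E" "card (f \<inter> f') = 3" "u \<in> f" "u \<notin> f'"
  shows "tau f f' u \<notin> f"
proof -
  obtain a b where ab0: "f - f' = {a}" "f' - f = {b}" using adj_facts[OF assms(1-3)] by blast
  note ab = ab_facts[OF ab0]
  show ?thesis unfolding tau_def using ab(3,4,7) assms(5) by simp
qed

lemma reach_map: "reach e f g \<Longrightarrow> inj_on g e \<and> g ` e \<subseteq> f"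
proof (induction rule: reach.induct)
  case (base e) then show ?case by auto
next
  case (step e f g f')
  have fE: "f \<in> E" using step.hyps(1) reach_E by blast
  have ti: "inj_on (tau f f') f" using tau_inj[OF fE step.hyps(2,3)] .
  have "inj_on (tau f f' \<circ> g) e"
    using comp_inj_on[OF conjunct1[OF step.IH] inj_on_subset[OF ti conjunct2[OF step.IH]]] .
  moreover have "(tau f f' \<circ> g) ` e \<subseteq> f'" using step.IH tau_in[OF fE step.hyps(2,3)] by auto
  ultimately show ?case by blast
qed

lemma reach_trans: "reach f h k \<Longrightarrow> reach e f g \<Longrightarrow> reach e h (k \<circ> g)"
proof (induction rule: reach.induct)
  case (base e) then show ?case by simp
next
  case (step f h k h')
  have "reach e h' (tau h h' \<circ> (k \<circ> g))" using reach.step[OF step.IH[OF step.prems] step.hyps(2,3)] .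
  then show ?case by (simp add: comp_def)
qed

lemma reach_rev: "reach e f g \<Longrightarrow> \<exists>h. reach f e h \<and> (\<forall>x\<in>e. h (g x) = x)"
proof (induction rule: reach.induct)
  case (base e)
  have "reach e e id" using base by (rule reach.base)
  moreover have "\<forall>x\<in>e. id (id x) = x" by simp
  ultimately show ?case by blast
next
  case (step e f g f')
  obtain h where h: "reach f e h" "\<forall>x\<in>e. h (g x) = x" using step.IH by blast
  have fE: "f \<in> E" using step.hyps(1) reach_E by blast
  have c: "card (f' \<inter> f) = 3" using step.hyps(3) by (simp add: Int_commute)
  have "reach f' f (tau f' f \<circ> id)" using reach.step[OF reach.base[OF step.hyps(2)] fE c] .
  then have "reach f' e (h \<circ> (tau f' f \<circ> id))" using reach_trans[OF h(1)] by simp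
  moreover have "\<forall>x\<in>e. (h \<circ> (tau f' f \<circ> id)) ((tau f f' \<circ> g) x) = x"
    using tau_back[OF fE step.hyps(2,3)] reach_map[OF step.hyps(1)] h(2) by auto
  ultimately show ?case by blast
qed

end


lemma fix4:
  fixes k g :: "'a \<Rightarrow> 'a"
  assumes dist: "a\<noteq>b" "a\<noteq>c" "a\<noteq>d" "b\<noteq>c" "b\<noteq>d" "c\<noteq>d"
  and ka: "k a = a" and ga: "g a = b"
  and kb: "k b = b \<or> k b = c \<or> k b = d"
  and kc: "k c = b \<or> k c = c \<or> k c = d"
  and kd: "k d = b \<or> k d = c \<or> k d = d"
  and gb: "g b = a \<or> g b = c \<or> g b = d"
  and gc: "g c = a \<or> g c = c \<or> g c = d"
  and gd: "g d = a \<or> g d = c \<or> g d = d"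
  and ik: "k b \<noteq> k c" "k b \<noteq> k d" "k c \<noteq> k d"
  and ig: "g b \<noteq> g c" "g b \<noteq> g d" "g c \<noteq> g d"
  and f0: "g a = a \<or> g b = b \<or> g c = c \<or> g d = d"
  shows "\<not> (k (g a) = a \<or> k (g b) = b \<or> k (g c) = c \<or> k (g d) = d)
   \<or> \<not> (k (g (g a)) = a \<or> k (g (g b)) = b \<or> k (g (g c)) = c \<or> k (g (g d)) = d)
   \<or> ((g a = a \<longrightarrow> k a = a) \<and> (g b = b \<longrightarrow> k b = b) \<and> (g c = c \<longrightarrow> k c = c) \<and> (g d = d \<longrightarrow> k d = d)) \<and>
     \<not> ((k a = a \<longrightarrow> g a = a) \<and> (k b = b \<longrightarrow> g b = b) \<and> (k c = c \<longrightarrow> g c = c) \<and> (k d = d \<longrightarrow> g d = d))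
   \<or> ((k (g a) = a \<longrightarrow> k a = a) \<and> (k (g b) = b \<longrightarrow> k b = b) \<and> (k (g c) = c \<longrightarrow> k c = c) \<and> (k (g d) = d \<longrightarrow> k d = d)) \<and>
     \<not> ((k a = a \<longrightarrow> k (g a) = a) \<and> (k b = b \<longrightarrow> k (g b) = b) \<and> (k c = c \<longrightarrow> k (g c) = c) \<and> (k d = d \<longrightarrow> k (g d) = d))
   \<or> ((k (g (g a)) = a \<longrightarrow> k a = a) \<and> (k (g (g b)) = b \<longrightarrow> k b = b) \<and> (k (g (g c)) = c \<longrightarrow> k c = c) \<and> (k (g (g d)) = d \<longrightarrow> k d = d)) \<and>
     \<not> ((k a = a \<longrightarrow> k (g (g a)) = a) \<and> (k b = b \<longrightarrow> k (g (g b)) = b) \<and> (k c = c \<longrightarrow> k (g (g c)) = c) \<and> (k d = d \<longrightarrow> k (g (g d)) = d))"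
proof -
  have G: "(g b = a \<and> g c = c \<and> g d = d) \<or> (g b = c \<and> g c = a \<and> g d = d) \<or> (g b = d \<and> g c = c \<and> g d = a)"
    using gb gc gd ig f0 ga dist by auto
  have K: "(k b = b \<and> k c = c \<and> k d = d) \<or> (k b = b \<and> k c = d \<and> k d = c) \<or> (k b = c \<and> k c = b \<and> k d = d)
     \<or> (k b = c \<and> k c = d \<and> k d = b) \<or> (k b = d \<and> k c = b \<and> k d = c) \<or> (k b = d \<and> k c = c \<and> k d = b)"
    using kb kc kd ik by auto
  show ?thesis using G K
    apply (elim disjE conjE)
    using ka ga dist by simp_all
qed


definition quad :: "'a \<Rightarrow> 'a \<Rightarrow> 'a \<Rightarrow> 'a \<Rightarrow> nat \<Rightarrow> 'a" where
  "quad p q r s i = (if i = 0 then p else if i = 1 then q else if i = 2 then r else s)"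

lemma lt4: "(j::nat) < 4 \<longleftrightarrow> j = 0 \<or> j = 1 \<or> j = 2 \<or> j = 3" by arith

lemma win_quad: "win (quad p q r s) 0 = {p,q,r,s}"
  unfolding win_def quad_def by simp

lemma quad_inj:
  assumes "p\<noteq>q" "p\<noteq>r" "p\<noteq>s" "q\<noteq>r" "q\<noteq>s" "r\<noteq>s" "i < 4" "j < 4" "quad p q r s i = quad p q r s j"
  shows "i = j"
  using assms unfolding lt4 quad_def by auto

lemma derange_list:
  assumes "card S = 4" "inj_on m S" "m ` S \<subseteq> S" "\<forall>u\<in>S. m u \<noteq> u"
  shows "\<exists>p q r s k. S = {p,q,r,s} \<and> p\<noteq>q \<and> p\<noteq>r \<and> p\<noteq>s \<and> q\<noteq>r \<and> q\<noteq>s \<and> r\<noteq>s \<and>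
     (k = 1 \<or> k = 2 \<or> k = (3::nat)) \<and> (\<forall>i<4. m (quad p q r s i) = quad p q r s ((i+k) mod 4))"
proof -
  have fin: "finite S" using assms(1) by (rule_tac ccontr) simp
  obtain p where p: "p \<in> S" using assms(1) by fastforce
  define q where "q = m p"
  have q: "q \<in> S" "q \<noteq> p" using assms p unfolding q_def by auto
  have im: "\<And>x y. x \<in> S \<Longrightarrow> y \<in> S \<Longrightarrow> m x = m y \<Longrightarrow> x = y" using assms(2) unfolding inj_on_def by blast
  have ms: "\<And>x. x \<in> S \<Longrightarrow> m x \<in> S" using assms(3) by blast
  have nf: "\<And>x. x \<in> S \<Longrightarrow> m x \<noteq> x" using assms(4) by blast
  show ?thesis
  proof (cases "m q = p")
    case True
    have "card (S - {p,q}) = 2" using assms(1) p q fin by (simp add: card_Diff_subset)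
    then obtain c d where cd: "S - {p,q} = {c,d}" "c \<noteq> d" unfolding card_2_iff by blast
    have cS: "c \<in> S" "c \<noteq> p" "c \<noteq> q" "d \<in> S" "d \<noteq> p" "d \<noteq> q" using cd by blast+
    have Sx: "\<And>x. x \<in> S \<Longrightarrow> x = p \<or> x = q \<or> x = c \<or> x = d" using cd by blast
    have mc: "m c = d"
    proof -
      have "m c \<noteq> c" using nf cS by blast
      moreover have "m c \<noteq> p" using im[of c q] True cS q by auto
      moreover have "m c \<noteq> q" using im[of c p] cS p q_def by auto
      ultimately show ?thesis using Sx[OF ms[OF cS(1)]] by blast
    qed
    have md: "m d = c"
    proof -
      have "m d \<noteq> d" using nf cS by blast
      moreover have "m d \<noteq> p" using im[of d q] True cS q by auto
      moreover have "m d \<noteq> q" using im[of d p] cS p q_def by auto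
      ultimately show ?thesis using Sx[OF ms[OF cS(4)]] by blast
    qed
    have "S = {p,c,q,d}" using Sx p q cS by blast
    moreover have "\<forall>i<4. m (quad p c q d i) = quad p c q d ((i+2) mod 4)"
      unfolding lt4 quad_def using mc md True q_def by auto
    moreover have "p\<noteq>c \<and> p\<noteq>q \<and> p\<noteq>d \<and> c\<noteq>q \<and> c\<noteq>d \<and> q\<noteq>d" using cS q cd(2) by metis
    moreover have "(2::nat) = 1 \<or> 2 = 2 \<or> 2 = (3::nat)" by simp
    ultimately show ?thesis by blast
  next
    case False
    define r where "r = m q"
    have r: "r \<in> S" "r \<noteq> p" "r \<noteq> q" using ms[OF q(1)] False nf[OF q(1)] unfolding r_def by auto
    have "card (S - {p,q,r}) = 1" using assms(1) p q r fin by (simp add: card_Diff_subset)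
    then obtain s where s: "S - {p,q,r} = {s}" by (rule card_1_singletonE)
    have sS: "s \<in> S" "s \<noteq> p" "s \<noteq> q" "s \<noteq> r" using s by blast+
    have Sx: "\<And>x. x \<in> S \<Longrightarrow> x = p \<or> x = q \<or> x = r \<or> x = s" using s by blast
    have msp: "m s = p"
    proof -
      have "m s \<noteq> s" using nf sS by blast
      moreover have "m s \<noteq> q" using im[of s p] sS p q_def by auto
      moreover have "m s \<noteq> r" using im[of s q] sS q r_def by auto
      ultimately show ?thesis using Sx[OF ms[OF sS(1)]] by blast
    qed
    have mr: "m r = s"
    proof -
      have "m r \<noteq> r" using nf r by blast
      moreover have "m r \<noteq> q" using im[of r p] r p q_def by auto
      moreover have "m r \<noteq> p" using im[of r s] r sS msp by auto
      ultimately show ?thesis using Sx[OF ms[OF r(1)]] by blast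
    qed
    have "S = {p,q,r,s}" using Sx p q r sS by blast
    moreover have "\<forall>i<4. m (quad p q r s i) = quad p q r s ((i+1) mod 4)"
      unfolding lt4 quad_def using mr msp q_def r_def by auto
    moreover have "p\<noteq>q \<and> p\<noteq>r \<and> p\<noteq>s \<and> q\<noteq>r \<and> q\<noteq>s \<and> r\<noteq>s" using sS q r by metis
    moreover have "(1::nat) = 1 \<or> 1 = 2 \<or> 1 = (3::nat)" by simp
    ultimately show ?thesis by blast
  qed
qed

context hg
begin

lemma lift:
  assumes "reach e f g" "win x 0 = e"
  shows "\<exists>y n. (\<forall>i<4. y i = x i) \<and> (\<forall>i\<le>n. win y i \<in> E) \<and> win y n = f \<and>
     (\<forall>j. n \<le> j \<and> j < n+4 \<longrightarrow> y j = g (x (j mod 4)))"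
  using assms
proof (induction rule: reach.induct)
  case (base e)
  show ?case
    by (rule exI[of _ x], rule exI[of _ 0]) (use base in auto)
next
  case (step e f g f')
  obtain y n where Y: "\<forall>i<4. y i = x i" "\<forall>i\<le>n. win y i \<in> E" "win y n = f"
     "\<forall>j. n \<le> j \<and> j < n+4 \<longrightarrow> y j = g (x (j mod 4))" using step.IH step.prems by blast
  have fE: "f \<in> E" using step.hyps(1) reach_E by blast
  obtain a b where ab0: "f - f' = {a}" "f' - f = {b}" using adj_facts[OF fE step.hyps(2,3)] by blast
  note ab = ab_facts[OF ab0]
  have "a \<in> win y n" using Y(3) ab(1) by simp
  then have "a = y n \<or> a = y (n+1) \<or> a = y (n+2) \<or> a = y (n+3)" unfolding win_def by simp
  then have "\<exists>k<4. y (n+k) = a"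
  proof (elim disjE)
    assume "a = y n" then show ?thesis by (intro exI[of _ 0]) simp
  next
    assume "a = y (n+1)" then show ?thesis by (intro exI[of _ 1]) simp
  next
    assume "a = y (n+2)" then show ?thesis by (intro exI[of _ 2]) simp
  next
    assume "a = y (n+3)" then show ?thesis by (intro exI[of _ 3]) simp
  qed
  then obtain k where k: "k < 4" "y (n+k) = a" by blast
  obtain y' n' where R: "n \<le> n'" "\<forall>i<n+4. y' i = y i" "\<forall>i\<le>n'. win y' i \<in> E"
     "win y' n' = win y n" "y' n' = a"
     "\<forall>j. n' \<le> j \<and> j < n'+4 \<longrightarrow> (\<exists>j0. n \<le> j0 \<and> j0 < n+4 \<and> j0 mod 4 = j mod 4 \<and> y' j = y j0)"
    using rotate[OF Y(2) k(2) k(1)] by blast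
  have c4: "card (win y' n') = 4" using R(4) Y(3) fE card4 by simp
  have dd: "y' n' \<noteq> y' (n'+1) \<and> y' n' \<noteq> y' (n'+2) \<and> y' n' \<noteq> y' (n'+3) \<and> y' (n'+1) \<noteq> y' (n'+2) \<and>
      y' (n'+1) \<noteq> y' (n'+3) \<and> y' (n'+2) \<noteq> y' (n'+3)"
    using distinct4[OF c4[unfolded win_def]] .
  have Tf: "{y' (n'+1), y' (n'+2), y' (n'+3)} = f \<inter> f'"
  proof -
    have "win y' n' = f" using R(4) Y(3) by simp
    then have "{y' (n'+1), y' (n'+2), y' (n'+3)} = f - {a}" using dd R(5) unfolding win_def by auto
    also have "\<dots> = f \<inter> f'" using ab0 by blast
    finally show ?thesis .
  qed
  define y2 where "y2 = y'(n'+4 := b)"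
  have y2v: "y2 (n'+1+3) = b" "\<And>t. t < n'+4 \<Longrightarrow> y2 t = y' t" unfolding y2_def by auto
  have y2w: "y2 (n'+1) = y' (n'+1)" "y2 (n'+1+1) = y' (n'+2)" "y2 (n'+1+2) = y' (n'+3)" "y2 (n'+1+3) = b"
    unfolding y2_def by (simp_all add: numeral_3_eq_3 numeral_2_eq_2)
  have w2: "win y2 (n'+1) = f'"
  proof -
    have "win y2 (n'+1) = {y' (n'+1), y' (n'+2), y' (n'+3), b}" unfolding win_def
      using y2w by (simp only:)
    also have "\<dots> = (f \<inter> f') \<union> {b}" using Tf by blast
    also have "\<dots> = f'" using ab0 by blast
    finally show ?thesis .
  qed
  have "\<forall>i<4. y2 i = x i" using y2v(2) R(1,2) Y(1) by auto
  moreover have "\<forall>i\<le>n'+1. win y2 i \<in> E"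
  proof (intro allI impI)
    fix i assume i: "i \<le> n'+1"
    show "win y2 i \<in> E"
    proof (cases "i \<le> n'")
      case True
      then have "win y2 i = win y' i" unfolding win_def using y2v(2) by auto
      then show ?thesis using R(3) True by auto
    next
      case False
      then have "i = n'+1" using i by simp
    then show ?thesis using w2 step.hyps(2) by simp
    qed
  qed
  moreover have "\<forall>j. n'+1 \<le> j \<and> j < n'+1+4 \<longrightarrow> y2 j = (tau f f' \<circ> g) (x (j mod 4))"
  proof (intro allI impI)
    fix j assume j: "n'+1 \<le> j \<and> j < n'+1+4"
    show "y2 j = (tau f f' \<circ> g) (x (j mod 4))"
    proof (cases "j < n'+4")
      case True
      have jr: "n' \<le> j \<and> j < n'+4" using j True by simp
      obtain j0 where j0: "n \<le> j0" "j0 < n+4" "j0 mod 4 = j mod 4" "y' j = y j0" using R(6) jr by blast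
      have "y' j = g (x (j mod 4))" using j0 Y(4) by auto
      moreover have "y' j \<in> f \<inter> f'"
      proof -
        have "j = n'+1 \<or> j = n'+2 \<or> j = n'+3" using j True by arith
        then have "y' j \<in> {y' (n'+1), y' (n'+2), y' (n'+3)}" by auto
        then show ?thesis unfolding Tf[symmetric] .
      qed
      ultimately show ?thesis using y2v(2)[OF True] unfolding tau_def by auto
    next
      case False
      then have jj: "j = n'+4" using j by auto
      have jr: "n' \<le> n' \<and> n' < n'+4" by simp
      obtain j0 where j0: "n \<le> j0" "j0 < n+4" "j0 mod 4 = n' mod 4" "y' n' = y j0" using R(6) jr by blast
      have jm: "j mod 4 = j0 mod 4" using jj j0(3) by simp
      have "y j0 = g (x (j0 mod 4))" using j0(1,2) Y(4) by blast
      then have "g (x (j mod 4)) = a" using jm j0(4) R(5) by simp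
      moreover have "y2 j = b" using jj unfolding y2_def by simp
      ultimately show ?thesis using ab(2,7) unfolding tau_def by simp
    qed
  qed
  ultimately show ?case using w2 by (intro exI[of _ y2] exI[of _ "n'+1"]) auto
qed

end


lemma win_memE: assumes "a \<in> win y n" shows "\<exists>k<4. y (n+k) = a"
proof -
  have "a = y n \<or> a = y (n+1) \<or> a = y (n+2) \<or> a = y (n+3)" using assms unfolding win_def by simp
  then show ?thesis
  proof (elim disjE)
    assume "a = y n" then show ?thesis by (intro exI[of _ 0]) simp
  next
    assume "a = y (n+1)" then show ?thesis by (intro exI[of _ 1]) simp
  next
    assume "a = y (n+2)" then show ?thesis by (intro exI[of _ 2]) simp
  next
    assume "a = y (n+3)" then show ?thesis by (intro exI[of _ 3]) simp
  qed
qed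

lemma sub4: "({x \<in> {a,b,c,d}. P x} \<subseteq> {x \<in> {a,b,c,d}. Q x}) = ((P a \<longrightarrow> Q a) \<and> (P b \<longrightarrow> Q b) \<and> (P c \<longrightarrow> Q c) \<and> (P d \<longrightarrow> Q d))"
  by auto

lemma ex4: "(\<exists>x\<in>{a,b,c,d}. P x) = (P a \<or> P b \<or> P c \<or> P d)"
  by auto

context hg
begin

lemma derange_bad:
  assumes "reach e e m" "\<forall>u\<in>e. m u \<noteq> u"
  shows "\<exists>z P. P > 4 \<and> P mod 4 \<noteq> 0 \<and> (\<forall>i. z (i+P) = z i) \<and> (\<forall>i. win z i \<in> E)"
proof -
  have eE: "e \<in> E" using reach_E assms(1) by blast
  have mm: "inj_on m e" "m ` e \<subseteq> e" using reach_map[OF assms(1)] by auto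
  obtain p q r s k where L: "e = {p,q,r,s}" "p\<noteq>q" "p\<noteq>r" "p\<noteq>s" "q\<noteq>r" "q\<noteq>s" "r\<noteq>s"
     "k = 1 \<or> k = 2 \<or> k = (3::nat)" "\<forall>i<4. m (quad p q r s i) = quad p q r s ((i+k) mod 4)"
    using derange_list[OF card4[OF eE] mm assms(2)] by (elim exE conjE) (rule that)
  define x where "x = quad p q r s"
  have wx: "win x 0 = e" using L(1) unfolding x_def by (simp add: win_quad)
  obtain y n where Y: "\<forall>i<4. y i = x i" "\<forall>i\<le>n. win y i \<in> E" "win y n = e"
     "\<forall>j. n \<le> j \<and> j < n+4 \<longrightarrow> y j = m (x (j mod 4))" using lift[OF assms(1) wx] by blast
  have xm: "\<And>j. m (x (j mod 4)) = x ((j+k) mod 4)"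
  proof -
    fix j :: nat
    have "j mod 4 < 4" by simp
    then have "m (x (j mod 4)) = x ((j mod 4 + k) mod 4)" using L(9) unfolding x_def by blast
    then show "m (x (j mod 4)) = x ((j+k) mod 4)" by (simp add: mod_add_left_eq)
  qed
  have "x 0 \<in> win y n" using Y(3) L(1) by (simp add: x_def quad_def)
  from win_memE[OF this] obtain k' where k': "k' < 4" "y (n+k') = x 0" by (elim exE conjE) (rule that)
  obtain y' n' where R: "n \<le> n'" "\<forall>i<n+4. y' i = y i" "\<forall>i\<le>n'. win y' i \<in> E"
     "win y' n' = win y n" "y' n' = x 0"
     "\<forall>j. n' \<le> j \<and> j < n'+4 \<longrightarrow> (\<exists>j0. n \<le> j0 \<and> j0 < n+4 \<and> j0 mod 4 = j mod 4 \<and> y' j = y j0)"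
    using rotate[OF Y(2) k'(2) k'(1)] by blast
  have Yr: "\<And>j. n' \<le> j \<Longrightarrow> j < n'+4 \<Longrightarrow> y' j = x ((j+k) mod 4)"
  proof -
    fix j assume "n' \<le> j" "j < n'+4"
    then obtain j0 where j0: "n \<le> j0" "j0 < n+4" "j0 mod 4 = j mod 4" "y' j = y j0" using R(6) by blast
    have "y j0 = m (x (j0 mod 4))" using Y(4) j0(1,2) by blast
    then show "y' j = x ((j+k) mod 4)" using j0(3,4) xm by simp
  qed
  have "x ((n'+k) mod 4) = x 0" using Yr[of n'] R(5) by simp
  then have nk: "(n'+k) mod 4 = 0"
    using quad_inj[of p q r s "(n'+k) mod 4" 0] L(2-7) unfolding x_def by simp
  have per: "\<And>i. i < 4 \<Longrightarrow> y' (n'+i) = y' i"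
  proof -
    fix i :: nat assume i: "i < 4"
    have "(n'+i+k) mod 4 = i" using nk i by presburger
    then have "y' (n'+i) = x i" using Yr[of "n'+i"] i by simp
    moreover have "y' i = x i" using R(2) Y(1) i by simp
    ultimately show "y' (n'+i) = y' i" by simp
  qed
  have Pne: "n' mod 4 \<noteq> 0" using nk L(8) by presburger
  have c0: "card (win y' 0) = 4" using R(3) card4 by simp
  have d0: "y' 0 \<noteq> y' 1 \<and> y' 0 \<noteq> y' 2 \<and> y' 0 \<noteq> y' 3"
    using distinct4[OF c0[unfolded win_def]] by (simp add: numeral_2_eq_2)
  have y0: "y' n' = y' 0" using per[of 0] by simp
  have P4: "n' > 4"
  proof (rule ccontr)
    assume "\<not> n' > 4"
    then have "n' = 0 \<or> n' = 1 \<or> n' = 2 \<or> n' = 3 \<or> n' = 4" by arith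
    then show False using Pne d0 y0 by auto
  qed
  define z where "z i = y' (i mod n')" for i
  have zper: "\<forall>i. z (i+n') = z i" unfolding z_def by simp
  have ymod: "\<And>q. q < n'+4 \<Longrightarrow> y' (q mod n') = y' q"
  proof -
    fix q assume q: "q < n'+4"
    show "y' (q mod n') = y' q"
    proof (cases "q < n'")
      case True then show ?thesis by simp
    next
      case False
      then obtain t where t: "q = n'+t" "t < 4" using q by (metis add.commute add_less_cancel_left le_Suc_ex not_less)
      then have "q mod n' = t" using P4 by simp
      then show ?thesis using per t by simp
    qed
  qed
  have zz: "\<And>i t. t < 4 \<Longrightarrow> z (i+t) = y' (i mod n' + t)"
  proof -
    fix i t :: nat assume t: "t < 4"
    have "z (i+t) = y' ((i mod n' + t) mod n')" unfolding z_def by (simp add: mod_add_left_eq)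
    also have "\<dots> = y' (i mod n' + t)" using ymod t P4 by (metis add_less_mono mod_less_divisor not_less_zero
        less_trans zero_less_numeral)
    finally show "z (i+t) = y' (i mod n' + t)" .
  qed
  have "\<forall>i. win z i \<in> E"
  proof
    fix i
    have "win z i = win y' (i mod n')"
      unfolding win_def using zz[of 0 i] zz[of 1 i] zz[of 2 i] zz[of 3 i] by simp
    moreover have "i mod n' \<le> n'" using P4 by (simp add: less_imp_le)
    ultimately show "win z i \<in> E" using R(3) by simp
  qed
  then show ?thesis using P4 Pne zper by blast
qed

end


context hg
begin

lemma common_fix:
  assumes hf: "\<And>m. reach e e m \<Longrightarrow> \<exists>u\<in>e. m u = u" and eE: "e \<in> E"
  shows "\<exists>u\<in>e. \<forall>m. reach e e m \<longrightarrow> m u = u"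
proof -
  define Fam where "Fam = {{x\<in>e. m x = x} | m. reach e e m}"
  have "Fam \<subseteq> Pow e" unfolding Fam_def by auto
  then have fin: "finite Fam" using finE[OF eE] by (meson finite_Pow_iff finite_subset)
  have "{x\<in>e. id x = x} \<in> Fam" unfolding Fam_def using reach.base[OF eE] by blast
  then have ne: "Fam \<noteq> {}" by blast
  obtain F where F: "F \<in> Fam" "\<forall>B\<in>Fam. B \<le> F \<longrightarrow> F = B" using finite_has_minimal[OF fin ne] by blast
  obtain k where k: "reach e e k" "F = {x\<in>e. k x = x}" using F(1) unfolding Fam_def by blast
  have minl: "\<And>h. reach e e h \<Longrightarrow> {x\<in>e. h x = x} \<subseteq> F \<Longrightarrow> F \<subseteq> {x\<in>e. h x = x}"
  proof -
    fix h assume "reach e e h" "{x\<in>e. h x = x} \<subseteq> F"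
    then have "{x\<in>e. h x = x} \<in> Fam" "{x\<in>e. h x = x} \<le> F" unfolding Fam_def by blast+
    then show "F \<subseteq> {x\<in>e. h x = x}" using F(2) by auto
  qed
  have key: "\<And>g u. reach e e g \<Longrightarrow> u \<in> F \<Longrightarrow> g u = u"
  proof (rule ccontr)
    fix g u assume g: "reach e e g" and u: "u \<in> F" and gu: "g u \<noteq> u"
    have ue: "u \<in> e" "k u = u" using u k(2) by auto
    define b where "b = g u"
    have gm: "inj_on g e" "g ` e \<subseteq> e" using reach_map[OF g] by auto
    have km: "inj_on k e" "k ` e \<subseteq> e" using reach_map[OF k(1)] by auto
    have bS: "b \<in> e" "b \<noteq> u" using gm ue gu b_def by auto
    have "card (e - {u,b}) = 2" using card4[OF eE] finE[OF eE] ue bS by (simp add: card_Diff_subset)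
    then obtain c d where cd: "e - {u,b} = {c,d}" "c \<noteq> d" unfolding card_2_iff by blast
    have cS: "c \<in> e" "c \<noteq> u" "c \<noteq> b" "d \<in> e" "d \<noteq> u" "d \<noteq> b" using cd by blast+
    have eq: "e = {u,b,c,d}" using cd ue bS by blast
    have Sx: "\<And>x. x \<in> e \<Longrightarrow> x = u \<or> x = b \<or> x = c \<or> x = d" using eq by blast
    have ki: "\<And>x y. x \<in> e \<Longrightarrow> y \<in> e \<Longrightarrow> k x = k y \<Longrightarrow> x = y" using km(1) unfolding inj_on_def by blast
    have gi: "\<And>x y. x \<in> e \<Longrightarrow> y \<in> e \<Longrightarrow> g x = g y \<Longrightarrow> x = y" using gm(1) unfolding inj_on_def by blast
    have ks: "\<And>x. x \<in> e \<Longrightarrow> k x \<in> e" using km(2) by blast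
    have gs: "\<And>x. x \<in> e \<Longrightarrow> g x \<in> e" using gm(2) by blast
    have kb: "k b = b \<or> k b = c \<or> k b = d"
      using Sx[OF ks[OF bS(1)]] ki[OF bS(1) ue(1)] ue(2) bS(2) by auto
    have kc: "k c = b \<or> k c = c \<or> k c = d"
      using Sx[OF ks[OF cS(1)]] ki[OF cS(1) ue(1)] ue(2) cS(2) by auto
    have kd: "k d = b \<or> k d = c \<or> k d = d"
      using Sx[OF ks[OF cS(4)]] ki[OF cS(4) ue(1)] ue(2) cS(5) by auto
    have gb: "g b = u \<or> g b = c \<or> g b = d"
      using Sx[OF gs[OF bS(1)]] gi[OF bS(1) ue(1)] b_def bS(2) by auto
    have gc: "g c = u \<or> g c = c \<or> g c = d"
      using Sx[OF gs[OF cS(1)]] gi[OF cS(1) ue(1)] b_def cS(2) by auto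
    have gd: "g d = u \<or> g d = c \<or> g d = d"
      using Sx[OF gs[OF cS(4)]] gi[OF cS(4) ue(1)] b_def cS(5) by auto
    have ik: "k b \<noteq> k c" "k b \<noteq> k d" "k c \<noteq> k d"
      using ki bS cS cd(2) by metis+
    have ig: "g b \<noteq> g c" "g b \<noteq> g d" "g c \<noteq> g d"
      using gi bS cS cd(2) by metis+
    have kg: "reach e e (k \<circ> g)" using reach_trans[OF k(1) g] .
    have kgg: "reach e e (k \<circ> g \<circ> g)" using reach_trans[OF kg g] .
    have f0: "g u = u \<or> g b = b \<or> g c = c \<or> g d = d" using hf[OF g] unfolding eq ex4 .
    have f1: "k (g u) = u \<or> k (g b) = b \<or> k (g c) = c \<or> k (g d) = d" using hf[OF kg] unfolding eq ex4 comp_apply .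
    have f2: "k (g (g u)) = u \<or> k (g (g b)) = b \<or> k (g (g c)) = c \<or> k (g (g d)) = d"
      using hf[OF kgg] unfolding eq ex4 comp_apply .
    have m0: "((g u = u \<longrightarrow> k u = u) \<and> (g b = b \<longrightarrow> k b = b) \<and> (g c = c \<longrightarrow> k c = c) \<and> (g d = d \<longrightarrow> k d = d))
      \<longrightarrow> ((k u = u \<longrightarrow> g u = u) \<and> (k b = b \<longrightarrow> g b = b) \<and> (k c = c \<longrightarrow> g c = c) \<and> (k d = d \<longrightarrow> g d = d))"
      using minl[OF g] unfolding k(2) eq sub4 by blast
    have m1: "((k (g u) = u \<longrightarrow> k u = u) \<and> (k (g b) = b \<longrightarrow> k b = b) \<and> (k (g c) = c \<longrightarrow> k c = c) \<and> (k (g d) = d \<longrightarrow> k d = d))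
      \<longrightarrow> ((k u = u \<longrightarrow> k (g u) = u) \<and> (k b = b \<longrightarrow> k (g b) = b) \<and> (k c = c \<longrightarrow> k (g c) = c) \<and> (k d = d \<longrightarrow> k (g d) = d))"
      using minl[OF kg] unfolding k(2) eq sub4 comp_apply by blast
    have m2: "((k (g (g u)) = u \<longrightarrow> k u = u) \<and> (k (g (g b)) = b \<longrightarrow> k b = b) \<and> (k (g (g c)) = c \<longrightarrow> k c = c) \<and> (k (g (g d)) = d \<longrightarrow> k d = d))
      \<longrightarrow> ((k u = u \<longrightarrow> k (g (g u)) = u) \<and> (k b = b \<longrightarrow> k (g (g b)) = b) \<and> (k c = c \<longrightarrow> k (g (g c)) = c) \<and> (k d = d \<longrightarrow> k (g (g d)) = d))"
      using minl[OF kgg] unfolding k(2) eq sub4 comp_apply by blast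
    note D = fix4[OF bS(2)[symmetric] cS(2)[symmetric] cS(5)[symmetric] cS(3)[symmetric] cS(6)[symmetric] cd(2)
        ue(2) b_def[symmetric] kb kc kd gb gc gd ik ig f0]
    from D show False
    proof (elim disjE)
      assume "\<not> (k (g u) = u \<or> k (g b) = b \<or> k (g c) = c \<or> k (g d) = d)" then show False using f1 by blast
    next
      assume "\<not> (k (g (g u)) = u \<or> k (g (g b)) = b \<or> k (g (g c)) = c \<or> k (g (g d)) = d)" then show False using f2 by blast
    qed (use m0 m1 m2 in blast)+
  qed
  obtain u where "u \<in> e" "k u = u" using hf[OF k(1)] by blast
  then have "u \<in> F" using k(2) by blast
  then show ?thesis using key \<open>u \<in> e\<close> by blast
qed

end


locale hg2 = hg +
  assumes hf: "\<And>e m. reach e e m \<Longrightarrow> \<exists>u\<in>e. m u = u"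
begin

definition conn where "conn e f \<longleftrightarrow> (\<exists>g. reach e f g)"
definition rep where "rep e = (SOME r. conn r e)"
definition v0 where "v0 r = (SOME u. u \<in> r \<and> (\<forall>m. reach r r m \<longrightarrow> m u = u))"
definition vv where "vv e = (SOME w. \<exists>g. reach (rep e) e g \<and> g (v0 (rep e)) = w)"
definition col where "col T = (if \<exists>f\<in>E. T \<subseteq> f \<and> vv f \<in> T then Some (vv (SOME f. f \<in> E \<and> T \<subseteq> f \<and> vv f \<in> T)) else None)"

lemma conn_refl: "e \<in> E \<Longrightarrow> conn e e"
  unfolding conn_def using reach.base by blast

lemma conn_trans: "conn a b \<Longrightarrow> conn b c \<Longrightarrow> conn a c"
  unfolding conn_def using reach_trans by blast

lemma conn_sym: "conn a b \<Longrightarrow> conn b a"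
  unfolding conn_def using reach_rev by blast

lemma rep_conn: "e \<in> E \<Longrightarrow> conn (rep e) e"
  unfolding rep_def by (rule someI[of "\<lambda>r. conn r e" e]) (rule conn_refl)

lemma rep_eq: assumes "conn e f" shows "rep e = rep f"
proof -
  have "(\<lambda>r. conn r e) = (\<lambda>r. conn r f)"
    using assms conn_sym conn_trans by (intro ext iffI) blast+
  then show ?thesis unfolding rep_def by simp
qed

lemma v0_prop: assumes "r \<in> E" shows "v0 r \<in> r \<and> (\<forall>m. reach r r m \<longrightarrow> m (v0 r) = v0 r)"
proof -
  have "\<exists>u. u \<in> r \<and> (\<forall>m. reach r r m \<longrightarrow> m u = u)" using common_fix[OF hf assms] by blast
  then show ?thesis unfolding v0_def by (rule someI_ex)
qed

lemma vv_char:
  assumes eE: "e \<in> E" and g: "reach (rep e) e g"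
  shows "g (v0 (rep e)) = vv e"
proof -
  let ?r = "rep e"
  have rE: "?r \<in> E" using reach_E g by blast
  have "\<exists>w g. reach ?r e g \<and> g (v0 ?r) = w" using g by blast
  then have "\<exists>g. reach ?r e g \<and> g (v0 ?r) = vv e" unfolding vv_def by (rule someI_ex)
  then obtain g1 where g1: "reach ?r e g1" "g1 (v0 ?r) = vv e" by blast
  obtain h where h: "reach e ?r h" "\<forall>x\<in>?r. h (g1 x) = x" using reach_rev[OF g1(1)] by blast
  have "reach ?r ?r (h \<circ> g)" using reach_trans[OF h(1) g] .
  then have hg: "h (g (v0 ?r)) = v0 ?r" using v0_prop[OF rE] by auto
  have v0r: "v0 ?r \<in> ?r" using v0_prop[OF rE] by blast
  have hg1: "h (g1 (v0 ?r)) = v0 ?r" using h(2) v0r by blast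
  have "inj_on h e" using reach_map[OF h(1)] by blast
  moreover have "g (v0 ?r) \<in> e" "g1 (v0 ?r) \<in> e" using reach_map[OF g] reach_map[OF g1(1)] v0r by blast+
  ultimately have "g (v0 ?r) = g1 (v0 ?r)" using hg hg1 unfolding inj_on_def by metis
  then show ?thesis using g1(2) by simp
qed

lemma vv_in: assumes "e \<in> E" shows "vv e \<in> e"
proof -
  obtain g where g: "reach (rep e) e g" using rep_conn[OF assms] unfolding conn_def by blast
  have rE: "rep e \<in> E" using reach_E g by blast
  have "g (v0 (rep e)) \<in> e" using reach_map[OF g] v0_prop[OF rE] by blast
  then show ?thesis using vv_char[OF assms g] by simp
qed

lemma vv_adj:
  assumes "e \<in> E" "f \<in> E" "card (e \<inter> f) = 3"
  shows "vv f = tau e f (vv e)"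
proof -
  have "reach e f (tau e f \<circ> id)" using reach.step[OF reach.base[OF assms(1)] assms(2,3)] .
  then have "conn e f" unfolding conn_def by blast
  then have req: "rep f = rep e" using rep_eq by simp
  obtain g where g: "reach (rep e) e g" using rep_conn[OF assms(1)] unfolding conn_def by blast
  have "reach (rep e) f (tau e f \<circ> g)" using reach.step[OF g assms(2,3)] .
  then have "(tau e f \<circ> g) (v0 (rep f)) = vv f" using vv_char[OF assms(2)] req by simp
  then show ?thesis using vv_char[OF assms(1) g] req by simp
qed

lemma inter3:
  assumes "e \<in> E" "f \<in> E" "e \<noteq> f" "T \<subseteq> e" "T \<subseteq> f" "card T = 3"
  shows "card (e \<inter> f) = 3 \<and> e \<inter> f = T"
proof -
  have fe: "finite e" using finE assms(1) by blast
  have "T \<subseteq> e \<inter> f" using assms by blast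
  then have c1: "3 \<le> card (e \<inter> f)" using card_mono[of "e \<inter> f" T] fe assms(6) by simp
  have "\<not> e \<subseteq> f"
  proof
    assume "e \<subseteq> f"
    then have "e = f" using card_subset_eq[of f e] finE assms(1,2) card4 by simp
    then show False using assms(3) by simp
  qed
  then have "e \<inter> f \<subset> e" by blast
  then have "card (e \<inter> f) < 4" using psubset_card_mono[OF fe] card4[OF assms(1)] by simp
  then have c3: "card (e \<inter> f) = 3" using c1 by simp
  have "T = e \<inter> f" using card_subset_eq[of "e \<inter> f" T] fe \<open>T \<subseteq> e \<inter> f\<close> c3 assms(6) by simp
  then show ?thesis using c3 by simp
qed

lemma coloring:
  "\<exists>c :: 'a set \<Rightarrow> 'a option.
       (\<forall>T. T \<subseteq> V \<and> card T = 3 \<longrightarrow> c T = None \<or> (\<exists>v\<in>T. c T = Some v)) \<and>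
       (\<forall>e\<in>E. \<exists>v\<in>e. (\<forall>T. T \<subseteq> e \<and> card T = 3 \<and> v \<in> T \<longrightarrow> c T = Some v) \<and>
                          c (e - {v}) = None)"
proof (rule exI[of _ col], intro conjI allI impI ballI)
  fix T :: "'a set"
  show "col T = None \<or> (\<exists>v\<in>T. col T = Some v)"
  proof (cases "\<exists>f\<in>E. T \<subseteq> f \<and> vv f \<in> T")
    case True
    then have ex: "\<exists>f. f \<in> E \<and> T \<subseteq> f \<and> vv f \<in> T" by blast
    have "vv (SOME f. f \<in> E \<and> T \<subseteq> f \<and> vv f \<in> T) \<in> T" using someI_ex[OF ex] by blast
    then show ?thesis unfolding col_def using True by simp
  next
    case False then show ?thesis unfolding col_def if_not_P[OF False] by simp
  qed
next
  fix e assume eE: "e \<in> E"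
  let ?v = "vv e"
  have ve: "?v \<in> e" using vv_in[OF eE] .
  have A: "\<forall>T. T \<subseteq> e \<and> card T = 3 \<and> ?v \<in> T \<longrightarrow> col T = Some ?v"
  proof (intro allI impI)
    fix T assume T: "T \<subseteq> e \<and> card T = 3 \<and> ?v \<in> T"
    have ex: "\<exists>f. f \<in> E \<and> T \<subseteq> f \<and> vv f \<in> T" using eE T by blast
    define f where "f = (SOME f. f \<in> E \<and> T \<subseteq> f \<and> vv f \<in> T)"
    have f: "f \<in> E" "T \<subseteq> f" "vv f \<in> T" using someI_ex[OF ex] unfolding f_def by blast+
    have "vv f = ?v"
    proof (cases "f = e")
      case True then show ?thesis by simp
    next
      case False
      have i3: "card (e \<inter> f) = 3 \<and> e \<inter> f = T" using inter3[OF eE f(1) False[symmetric] _ f(2)] T by blast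
      then have "vv f = tau e f ?v" using vv_adj[OF eE f(1)] by blast
      moreover have "?v \<in> f" using T f(2) by blast
      ultimately show ?thesis unfolding tau_def by simp
    qed
    then show "col T = Some ?v" unfolding col_def using ex f_def by auto
  qed
  have B: "col (e - {?v}) = None"
  proof (rule ccontr)
    assume "col (e - {?v}) \<noteq> None"
    then obtain f where f: "f \<in> E" "e - {?v} \<subseteq> f" "vv f \<in> e - {?v}" unfolding col_def by (auto split: if_splits)
    have fe: "finite e" using finE eE by blast
    have cT: "card (e - {?v}) = 3" using card4[OF eE] ve fe by simp
    show False
    proof (cases "f = e")
      case True then show False using f(3) by simp
    next
      case False
      have i3: "card (e \<inter> f) = 3 \<and> e \<inter> f = e - {?v}" using inter3[OF eE f(1) False[symmetric] _ f(2) cT] by blast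
      then have "vv f = tau e f ?v" using vv_adj[OF eE f(1)] by blast
      moreover have "?v \<notin> f" using i3 ve by blast
      ultimately have "vv f \<notin> e" using tau_out[OF eE f(1) conjunct1[OF i3] ve] by simp
      then show False using f(3) by blast
    qed
  qed
  show "\<exists>v\<in>e. (\<forall>T. T \<subseteq> e \<and> card T = 3 \<and> v \<in> T \<longrightarrow> col T = Some v) \<and> col (e - {v}) = None"
    using A B ve by blast
qed

end


lemma set4: "{h j | j. j < (4::nat)} = {h 0, h 1, h 2, h 3}"
  unfolding lt4 by blast

lemma cyc_edge_card:
  assumes "4 < L" "i < L"
  shows "card {(i+j) mod L | j. j < (4::nat)} = 4"
proof -
  have m: "\<And>t. t < 4 \<Longrightarrow> (i+t) mod L = (if i+t < L then i+t else i+t-L)"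
  proof -
    fix t :: nat assume t: "t < 4"
    show "(i+t) mod L = (if i+t < L then i+t else i+t-L)"
    proof (cases "i+t < L")
      case True then show ?thesis by simp
    next
      case False
      then have "i+t-L < L" using t assms by simp
      then have "(i+t-L) mod L = i+t-L" by simp
      then show ?thesis using False by (simp add: mod_if)
    qed
  qed
  have "inj_on (\<lambda>j. (i+j) mod L) {..<4}"
  proof (rule inj_onI)
    fix a b assume a: "a \<in> {..<(4::nat)}" and b: "b \<in> {..<(4::nat)}" and eq: "(i+a) mod L = (i+b) mod L"
    then have "(if i+a < L then i+a else i+a-L) = (if i+b < L then i+b else i+b-L)" using m by simp
    then show "a = b" using a b assms by (auto split: if_splits)
  qed
  then have "card ((\<lambda>j. (i+j) mod L) ` {..<4}) = 4" by (simp add: card_image)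
  moreover have "{(i+j) mod L | j. j < (4::nat)} = (\<lambda>j. (i+j) mod L) ` {..<4}" by auto
  ultimately show ?thesis by simp
qed

lemma walk_not_free:
  assumes G: "r_graph 4 G" and L: "4 < L" "L mod 4 = 2" and per: "\<forall>i. z (i+L) = z i"
    and W: "\<forall>i. win z i \<in> snd G"
  shows "\<not> family_hom_free G (tight_cycle_family 4 2)"
proof
  assume fh: "family_hom_free G (tight_cycle_family 4 2)"
  have "tight_cycle 4 L \<in> tight_cycle_family 4 2" unfolding tight_cycle_family_def using L by auto
  then have hf: "hom_free G (tight_cycle 4 L)" using fh unfolding family_hom_free_def by blast
  have zq: "\<And>q r. z (r + q*L) = z r"
  proof -
    fix q r show "z (r + q*L) = z r"
    proof (induction q)
      case 0 then show ?case by simp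
    next
      case (Suc q)
      have "z (r + Suc q * L) = z ((r + q*L) + L)" by (simp add: algebra_simps)
      then show ?case using per Suc by simp
    qed
  qed
  have zm: "\<And>n. z (n mod L) = z n"
  proof -
    fix n
    have "n = n mod L + (n div L) * L" by simp
    then show "z (n mod L) = z n" using zq[of "n mod L" "n div L"] by simp
  qed
  have Gs: "\<And>e. e \<in> snd G \<Longrightarrow> e \<subseteq> fst G \<and> card e = 4" using G unfolding r_graph_def by blast
  have "is_hom (tight_cycle 4 L) G z"
    unfolding is_hom_def
  proof (intro conjI ballI)
    fix x assume "x \<in> fst (tight_cycle 4 L)"
    have "z x \<in> win z x" unfolding win_def by simp
    then show "z x \<in> fst G" using Gs[OF W[rule_format, of x]] by blast
  next
    fix f assume "f \<in> snd (tight_cycle 4 L)"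
    then obtain i where i: "i < L" "f = {(i+j) mod L | j. j < 4}" unfolding tight_cycle_def by auto
    have "z ` f = {z ((i+0) mod L), z ((i+1) mod L), z ((i+2) mod L), z ((i+3) mod L)}"
      unfolding i(2) set4 by simp
    also have "\<dots> = win z i" unfolding win_def zm by simp
    finally have zf: "z ` f = win z i" .
    show "z ` f \<in> snd G" using zf W by simp
    show "card (z ` f) = card f" using zf Gs[OF W[rule_format, of i]] cyc_edge_card[OF L(1) i(1)] i(2) by simp
  qed
  then show False using hf unfolding hom_free_def by blast
qed

definition colf :: "('a set \<Rightarrow> 'a option) \<Rightarrow> 'a \<Rightarrow> 'a \<Rightarrow> 'a \<Rightarrow> nat" where
  "colf c p q r = (case c {p,q,r} of None \<Rightarrow> 0 | Some v \<Rightarrow> if v = p then 3 else if v = q then 2 else 1)"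

lemma col_step:
  assumes d: "p\<noteq>q" "p\<noteq>r" "p\<noteq>s" "q\<noteq>r" "q\<noteq>s" "r\<noteq>s"
    and C: "\<exists>v\<in>{p,q,r,s}. (\<forall>T. T \<subseteq> {p,q,r,s} \<and> card T = 3 \<and> v \<in> T \<longrightarrow> c T = Some v) \<and> c ({p,q,r,s} - {v}) = None"
  shows "colf c q r s = (colf c p q r + 1) mod 4"
proof -
  obtain v where v: "v \<in> {p,q,r,s}" "\<forall>T. T \<subseteq> {p,q,r,s} \<and> card T = 3 \<and> v \<in> T \<longrightarrow> c T = Some v"
    "c ({p,q,r,s} - {v}) = None" using C by blast
  have c1: "card {p,q,r} = 3" "card {q,r,s} = 3" using d by auto
  have s1: "{p,q,r} \<subseteq> {p,q,r,s}" "{q,r,s} \<subseteq> {p,q,r,s}" by auto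
  have e1: "{p,q,r,s} - {p} = {q,r,s}" "{p,q,r,s} - {s} = {p,q,r}" using d by auto
  have "v = p \<or> v = q \<or> v = r \<or> v = s" using v(1) by simp
  then show ?thesis
  proof (elim disjE)
    assume "v = p"
    then have "c {p,q,r} = Some p" "c {q,r,s} = None" using v(2,3) c1 s1 e1 by auto
    then show ?thesis unfolding colf_def using d by simp
  next
    assume "v = q"
    then have "c {p,q,r} = Some q" "c {q,r,s} = Some q" using v(2) c1 s1 by auto
    then show ?thesis unfolding colf_def using d by simp
  next
    assume "v = r"
    then have "c {p,q,r} = Some r" "c {q,r,s} = Some r" using v(2) c1 s1 by auto
    then show ?thesis unfolding colf_def using d by simp
  next
    assume "v = s"
    then have "c {p,q,r} = None" "c {q,r,s} = Some s" using v(2,3) c1 s1 e1 by auto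
    then show ?thesis unfolding colf_def using d by simp
  qed
qed

lemma easy:
  assumes G: "r_graph 4 G"
    and C: "\<forall>e\<in>snd G. \<exists>v\<in>e. (\<forall>T. T \<subseteq> e \<and> card T = 3 \<and> v \<in> T \<longrightarrow> c T = Some v) \<and> c (e - {v}) = None"
  shows "family_hom_free G (tight_cycle_family 4 2)"
  unfolding family_hom_free_def hom_free_def
proof (intro ballI notI)
  fix F assume "F \<in> tight_cycle_family 4 2"
  then obtain L where L: "F = tight_cycle 4 L" "4 < L" "L mod 4 = 2" unfolding tight_cycle_family_def by auto
  assume "\<exists>\<phi>. is_hom F G \<phi>"
  then obtain \<phi> where ph: "is_hom (tight_cycle 4 L) G \<phi>" using L(1) by blast
  define x where "x i = \<phi> (i mod L)" for i
  have Gs: "\<And>e. e \<in> snd G \<Longrightarrow> card e = 4" using G unfolding r_graph_def by blast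
  have W: "\<And>i. win x i \<in> snd G"
  proof -
    fix i
    let ?f = "{((i mod L) + j) mod L | j. j < (4::nat)}"
    have "?f \<in> snd (tight_cycle 4 L)" unfolding tight_cycle_def using L(2) by auto
    then have "\<phi> ` ?f \<in> snd G" using ph unfolding is_hom_def by blast
    moreover have "\<phi> ` ?f = win x i"
    proof -
      have mm: "\<And>t. (i mod L + t) mod L = (i + t) mod L" by (simp add: mod_add_left_eq)
      show ?thesis unfolding set4 mm win_def x_def by simp
    qed
    ultimately show "win x i \<in> snd G" by simp
  qed
  define st where "st i = colf c (x i) (x (i+1)) (x (i+2))" for i
  have stS: "\<And>i. st (i+1) = (st i + 1) mod 4"
  proof -
    fix i
    have c4: "card (win x i) = 4" using Gs W by blast
    have d: "x i \<noteq> x (i+1) \<and> x i \<noteq> x (i+2) \<and> x i \<noteq> x (i+3) \<and> x (i+1) \<noteq> x (i+2) \<and> x (i+1) \<noteq> x (i+3) \<and> x (i+2) \<noteq> x (i+3)"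
      using distinct4[OF c4[unfolded win_def]] .
    have Ce: "\<exists>v\<in>{x i, x (i+1), x (i+2), x (i+3)}. (\<forall>T. T \<subseteq> {x i, x (i+1), x (i+2), x (i+3)} \<and> card T = 3 \<and> v \<in> T \<longrightarrow> c T = Some v)
       \<and> c ({x i, x (i+1), x (i+2), x (i+3)} - {v}) = None" using C W[of i] unfolding win_def by blast
    have D: "x i \<noteq> x (i+1)" "x i \<noteq> x (i+2)" "x i \<noteq> x (i+3)" "x (i+1) \<noteq> x (i+2)" "x (i+1) \<noteq> x (i+3)" "x (i+2) \<noteq> x (i+3)"
      using d by blast+
    have "st (i+1) = colf c (x (i+1)) (x (i+2)) (x (i+3))" unfolding st_def
      by (simp add: numeral_3_eq_3 numeral_2_eq_2)
    also have "\<dots> = (colf c (x i) (x (i+1)) (x (i+2)) + 1) mod 4" by (rule col_step[OF D Ce])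
    finally show "st (i+1) = (st i + 1) mod 4" unfolding st_def .
  qed
  have stI: "\<And>i. st i = (st 0 + i) mod 4"
  proof -
    fix i show "st i = (st 0 + i) mod 4"
    proof (induction i)
      case 0
      have "st 0 < 4" unfolding st_def colf_def by (auto split: option.splits)
      then show ?case by simp
    next
      case (Suc i)
      then show ?case using stS[of i] by (simp add: mod_Suc_eq)
    qed
  qed
  have xL: "\<And>t. x (L + t) = x t" unfolding x_def by simp
  have "st L = st 0" unfolding st_def using xL[of 0] xL[of 1] xL[of 2] by (simp add: numeral_2_eq_2)
  moreover have "st 0 < 4" unfolding st_def colf_def by (auto split: option.splits)
  ultimately have "(st 0 + L) mod 4 = st 0" using stI[of L] by simp
  then show False using L(3) \<open>st 0 < 4\<close> by presburger
qed

theorem theorem1p2: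
  fixes G :: "'a set \<times> 'a set set"
  assumes "r_graph 4 G"
  shows "family_hom_free G (tight_cycle_family 4 2) \<longleftrightarrow>
    (\<exists>c :: 'a set \<Rightarrow> 'a option.
       (\<forall>T. T \<subseteq> fst G \<and> card T = 3 \<longrightarrow> c T = None \<or> (\<exists>v\<in>T. c T = Some v)) \<and>
       (\<forall>e\<in>snd G. \<exists>v\<in>e. (\<forall>T. T \<subseteq> e \<and> card T = 3 \<and> v \<in> T \<longrightarrow> c T = Some v) \<and>
                          c (e - {v}) = None))"
proof -
  have c4: "\<And>e. e \<in> snd G \<Longrightarrow> card e = 4" using assms unfolding r_graph_def by blast
  interpret h: hg "snd G" using c4 by unfold_locales
  show ?thesis
  proof
    assume fh: "family_hom_free G (tight_cycle_family 4 2)"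
    have hf: "\<And>e m. h.reach e e m \<Longrightarrow> \<exists>u\<in>e. m u = u"
    proof (rule ccontr)
      fix e m assume r: "h.reach e e m" and n: "\<not> (\<exists>u\<in>e. m u = u)"
      then obtain z P where zP: "P > 4" "P mod 4 \<noteq> 0" "\<forall>i. z (i+P) = z i" "\<forall>i. win z i \<in> snd G"
        using h.derange_bad[OF r] by blast
      show False
      proof (cases "P mod 4 = 2")
        case True
        then show False using walk_not_free[OF assms zP(1) True zP(3,4)] fh by blast
      next
        case False
        then have m2: "(2*P) mod 4 = 2" using zP(2) by presburger
        have "\<forall>i. z (i + 2*P) = z i" using zP(3) by (metis add.assoc mult_2)
        moreover have "2*P > 4" using zP(1) by simp
        ultimately show False using walk_not_free[OF assms _ m2 _ zP(4)] fh by blast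
      qed
    qed
    interpret h2: hg2 "snd G" using c4 hf by unfold_locales
    show "\<exists>c :: 'a set \<Rightarrow> 'a option.
       (\<forall>T. T \<subseteq> fst G \<and> card T = 3 \<longrightarrow> c T = None \<or> (\<exists>v\<in>T. c T = Some v)) \<and>
       (\<forall>e\<in>snd G. \<exists>v\<in>e. (\<forall>T. T \<subseteq> e \<and> card T = 3 \<and> v \<in> T \<longrightarrow> c T = Some v) \<and>
                          c (e - {v}) = None)" using h2.coloring .
  next
    assume "\<exists>c :: 'a set \<Rightarrow> 'a option.
       (\<forall>T. T \<subseteq> fst G \<and> card T = 3 \<longrightarrow> c T = None \<or> (\<exists>v\<in>T. c T = Some v)) \<and>
       (\<forall>e\<in>snd G. \<exists>v\<in>e. (\<forall>T. T \<subseteq> e \<and> card T = 3 \<and> v \<in> T \<longrightarrow> c T = Some v) \<and>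
                          c (e - {v}) = None)"
    then obtain c where "\<forall>e\<in>snd G. \<exists>v\<in>e. (\<forall>T. T \<subseteq> e \<and> card T = 3 \<and> v \<in> T \<longrightarrow> c T = Some v) \<and>
                          c (e - {v}) = None" by blast
    then show "family_hom_free G (tight_cycle_family 4 2)" using easy[OF assms] by blast
  qed
qed


end
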